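(* Let $S$ be a training set of examples $(\mathbf{x},y)$ with $\mathbf{x}\in[-1,1]^d$, $y\in\{1,\dots,k\}$, and let $\epsilon>0$, $c>0$, $r\in\mathbb{N}$. Assume there exists $W^\star\in\mathbb{R}^{k\times d}$ with $L(W^\star)\le\epsilon$, all entries of $W^\star$ in $[-c,c]$, and $\|W^\star\|_{\infty,0}=r$. Then ShareBoost, run for $T=\lceil 4r^2c^2/\epsilon\rceil$ iterations, outputs a matrix $W$ with $L(W)\le 2\epsilon$ and $\|W\|_{\infty,0}\le \lceil 4r^2c^2/\epsilon\rceil$.
   Context: For $W\in\mathbb{R}^{k\times d}$, $W_{\cdot,i}$ denotes its $i$-th column and $\|W\|_{\infty,0}=|\{i:\|W_{\cdot,i}\|_\infty>0\}|$. The loss of $W$ on $(\mathbf{x},y)$ is $\ell(W,(\mathbf{x},y))=\ln\sum_{y'\in\{1,\dots,k\}}\exp\big(\mathbf{1}[y'\neq y]-(W\mathbf{x})_y+(W\mathbf{x})_{y'}\big)$, and $L(W)=\frac1{|S|}\sum_{(\mathbf{x},y)\in S}\ell(W,(\mathbf{x},y))$. Write $\nabla_r L(W)\in\mathbb{R}^k$ for the $r$-th column of $\nabla L(W)$. The ShareBoost algorithm: initialize $W=0$, $I=\emptyset$; for $t=1,\dots,T$: choose $r\in\{1,\dots,d\}$ maximizing $\|\nabla_r L(W)\|_1$ (ties broken arbitrarily), set $I\leftarrow I\cup\{r\}$, and set $W\leftarrow\arg\min\{L(V): V_{\cdot,i}=0\text{ for all }i\notin I\}$ (a minimizer is assumed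 to be attained at every iteration). *)

theory Defs
  imports "HOL-Analysis.Analysis"
begin

text \<open>Classes are indexed by a finite type 'k (k = CARD('k)), features by a finite
type 'd (d = CARD('d)).  A weight matrix W in R^{k x d} is a value of type real^'d^'k,
so W $ y $ i is the entry in row y, column i.\<close>

type_synonym ('d,'k) example = "(real^'d) \<times> 'k"

definition sb_loss :: "real^'d^'k \<Rightarrow> ('d,'k) example \<Rightarrow> real" where
  "sb_loss W ex = (case ex of (x, y) \<Rightarrow>
     ln (\<Sum>y'\<in>(UNIV::'k set). exp ((if y' \<noteq> y then 1 else 0) - (W *v x) $ y + (W *v x) $ y')))"

definition sb_L :: "('d,'k) example list \<Rightarrow> real^'d^'k \<Rightarrow> real" where
  "sb_L S W = (\<Sum>ex\<leftarrow>S. sb_loss W ex) / real (length S)"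

text \<open>Gradient of L at W (w.r.t. the Frobenius inner product on real^'d^'k).\<close>
definition sb_grad :: "('d,'k) example list \<Rightarrow> real^'d^'k \<Rightarrow> real^'d^'k" where
  "sb_grad S W = (THE G. GDERIV (sb_L S) W :> G)"

definition l1norm :: "real^'k \<Rightarrow> real" where
  "l1norm v = (\<Sum>j\<in>(UNIV::'k set). \<bar>v $ j\<bar>)"

definition norm_inf0 :: "real^'d^'k \<Rightarrow> nat" where
  "norm_inf0 W = card {i::'d. infnorm (column i W) > 0}"

text \<open>A run of ShareBoost for T iterations: Ws t, Is t are W and I after t iterations,
rs t is the column chosen in iteration t+1 (ties and minimizers arbitrary).\<close>
definition shareboost_run ::
  "('d,'k) example list \<Rightarrow> nat \<Rightarrow> (nat \<Rightarrow> real^'d^'k) \<Rightarrow> (nat \<Rightarrow> 'd set) \<Rightarrow> (nat \<Rightarrow> 'd) \<Rightarrow> bool" where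
  "shareboost_run S T Ws Is rs \<longleftrightarrow>
     Ws 0 = 0 \<and> Is 0 = {} \<and>
     (\<forall>t<T.
        (\<forall>i. l1norm (column i (sb_grad S (Ws t))) \<le> l1norm (column (rs t) (sb_grad S (Ws t)))) \<and>
        Is (Suc t) = insert (rs t) (Is t) \<and>
        (\<forall>i. i \<notin> Is (Suc t) \<longrightarrow> column i (Ws (Suc t)) = 0) \<and>
        (\<forall>V. (\<forall>i. i \<notin> Is (Suc t) \<longrightarrow> column i V = 0) \<longrightarrow> sb_L S (Ws (Suc t)) \<le> sb_L S V))"

end

theory Submission
  imports Defs
begin


lemma hoeff_aux:
  fixes h p :: real
  assumes "h \<ge> 0" and "p \<ge> 0"
  defines "L \<equiv> (\<lambda>h. -h * p + ln (1 + p * (exp h - 1)))"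
  shows   "L h \<le> h\<^sup>2 / 8"
proof (cases "h = 0")
  case False
  hence h: "h > 0"
    using \<open>h \<ge> 0\<close> by simp
  define L' where "L' = (\<lambda>h. -p + p * exp h / (1 + p * (exp h - 1)))"
  define L'' where "L'' = (\<lambda>h. -(p\<^sup>2) * exp h * exp h / (1 + p * (exp h - 1))\<^sup>2 +
                              p * exp h / (1 + p * (exp h - 1)))"
  define Ls where "Ls = (\<lambda>n. [L, L', L''] ! n)"
  have [simp]: "L 0 = 0" "L' 0 = 0"
    by (auto simp: L_def L'_def)
  have L': "(L has_real_derivative L' x) (at x)" if "x \<in> {0..h}" for x
  proof -
    have "1 + p * (exp x - 1) > 0"
      using \<open>p \<ge> 0\<close> that by (intro add_pos_nonneg mult_nonneg_nonneg) auto
    thus ?thesis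
      unfolding L_def L'_def by (auto intro!: derivative_eq_intros)
  qed
  have L'': "(L' has_real_derivative L'' x) (at x)" if "x \<in> {0..h}" for x
  proof -
    have *: "1 + p * (exp x - 1) > 0"
      using \<open>p \<ge> 0\<close> that by (intro add_pos_nonneg mult_nonneg_nonneg) auto
    show ?thesis
      unfolding L'_def L''_def
      by (insert *, (rule derivative_eq_intros refl | simp)+) (auto simp: divide_simps; algebra)
  qed
  have diff: "\<forall>m t. m < 2 \<and> 0 \<le> t \<and> t \<le> h \<longrightarrow> (Ls m has_real_derivative Ls (Suc m) t) (at t)"
    using L' L'' by (auto simp: Ls_def nth_Cons split: nat.splits)
  from Taylor[of 2 Ls L 0 h 0 h, OF _ _ diff]
    obtain t where t: "t \<in> {0<..<h}" "L h = L'' t * h\<^sup>2 / 2"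
      using \<open>h > 0\<close> by (auto simp: Ls_def lessThan_nat_numeral)
  define u where "u = p * exp t / (1 + p * (exp t - 1))"
  have "L'' t = u * (1 - u)"
    by (simp add: L''_def u_def divide_simps; algebra)
  also have "\<dots> \<le> 1 / 4"
  proof -
    have "u * (1 - u) = -(u - 1 / 2)\<^sup>2 + 1 / 4"
      by (simp add: field_simps power2_eq_square)
    also have "\<dots> \<le> 0 + 1 / 4"
      by (intro add_mono) auto
    finally show ?thesis by simp
  qed
  finally have "L'' t \<le> 1 / 4" .
  note t(2)
  also have "L'' t * h\<^sup>2 / 2 \<le> (1 / 4) * h\<^sup>2 / 2"
    using \<open>L'' t \<le> 1 / 4\<close> by (intro mult_right_mono divide_right_mono) auto
  finally show "L h \<le> h\<^sup>2 / 8" by simp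
qed (auto simp: L_def)

lemma exp_chord:
  fixes a b x :: real
  assumes "a < b" "a \<le> x" "x \<le> b"
  shows "exp x \<le> ((b - x) * exp a + (x - a) * exp b) / (b - a)"
proof -
  define t where "t = (x - a) / (b - a)"
  have t: "0 \<le> t" "t \<le> 1" using assms by (auto simp: t_def divide_simps)
  have tt: "t * (b - a) = x - a" using assms by (simp add: t_def)
  have x: "x = (1 - t) * a + t * b" using tt by (simp add: algebra_simps)
  have t1: "1 - t = (b - x) / (b - a)" using assms by (simp add: t_def field_simps)
  have "exp ((1 - t) * a + t * b) \<le> (1 - t) * exp a + t * exp b"
    using convex_onD[OF exp_convex t(1) t(2)] by simp
  also have "(1 - t) * exp a + t * exp b = ((b - x) * exp a + (x - a) * exp b) / (b - a)"
    unfolding t1 by (simp add: t_def add_divide_distrib)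
  finally show ?thesis using x by simp
qed

lemma hoeff_finite:
  fixes A :: "'a set" and p d :: "'a \<Rightarrow> real"
  assumes A: "finite A" and p: "\<And>j. j \<in> A \<Longrightarrow> p j \<ge> 0" and p1: "(\<Sum>j\<in>A. p j) = 1"
    and d: "\<And>j. j \<in> A \<Longrightarrow> a \<le> d j \<and> d j \<le> b"
  shows "(\<Sum>j\<in>A. p j * exp (d j)) \<le> exp ((\<Sum>j\<in>A. p j * d j) + (b - a)\<^sup>2 / 8)"
proof -
  define m where "m = (\<Sum>j\<in>A. p j * d j)"
  have ma: "a \<le> m"
  proof -
    have "a = (\<Sum>j\<in>A. p j * a)" using p1 by (simp add: sum_distrib_right[symmetric])
    also have "\<dots> \<le> m" unfolding m_def using p d by (intro sum_mono mult_left_mono) auto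
    finally show ?thesis .
  qed
  have mb: "m \<le> b"
  proof -
    have "m \<le> (\<Sum>j\<in>A. p j * b)" unfolding m_def using p d by (intro sum_mono mult_left_mono) auto
    also have "\<dots> = b" using p1 by (simp add: sum_distrib_right[symmetric])
    finally show ?thesis .
  qed
  show ?thesis
  proof (cases "a < b")
    case False
    then have ab: "a = b" using ma mb by simp
    then have "\<And>j. j \<in> A \<Longrightarrow> d j = a" using d by force
    then have "(\<Sum>j\<in>A. p j * exp (d j)) = (\<Sum>j\<in>A. p j) * exp a" 
      by (simp add: sum_distrib_right)
    moreover have "m = a" using ma mb ab by simp
    ultimately show ?thesis using p1 ab by (simp add: m_def)
  next
    case True
    have "(\<Sum>j\<in>A. p j * exp (d j)) \<le> (\<Sum>j\<in>A. p j * (((b - d j) * exp a + (d j - a) * exp b) / (b - a)))"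
      using p d True by (intro sum_mono mult_left_mono exp_chord) auto
    also have "\<dots> = (\<Sum>j\<in>A. (p j * (b*exp a - a*exp b) + (p j * d j) * (exp b - exp a)) / (b - a))"
      using True by (intro sum.cong) (auto simp: field_simps)
    also have "\<dots> = ((\<Sum>j\<in>A. p j) * (b*exp a - a*exp b) + (\<Sum>j\<in>A. p j * d j) * (exp b - exp a)) / (b - a)"
      by (simp add: sum_divide_distrib[symmetric] sum.distrib sum_distrib_right)
    also have "\<dots> = ((b - m) * exp a + (m - a) * exp b) / (b - a)"
      using p1 unfolding m_def by (simp add: algebra_simps)
    also have "\<dots> \<le> exp (m + (b - a)\<^sup>2 / 8)"
    proof -
      define h where "h = b - a"
      define q where "q = (m - a) / (b - a)"
      have h0: "h > 0" using True by (simp add: h_def)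
      have q0: "q \<ge> 0" using ma True by (simp add: q_def)
      have pos: "1 + q * (exp h - 1) > 0" using q0 h0 by (intro add_pos_nonneg mult_nonneg_nonneg) auto
      have "-h * q + ln (1 + q * (exp h - 1)) \<le> h\<^sup>2 / 8" using hoeff_aux[of h q] h0 q0 by simp
      then have "ln (1 + q * (exp h - 1)) \<le> h * q + h\<^sup>2 / 8" by simp
      then have "1 + q * (exp h - 1) \<le> exp (h * q + h\<^sup>2 / 8)"
        using pos by (metis exp_le_cancel_iff exp_ln)
      then have "exp a * (1 + q * (exp h - 1)) \<le> exp a * exp (h * q + h\<^sup>2 / 8)" by simp
      also have "exp a * exp (h * q + h\<^sup>2 / 8) = exp (m + (b - a)\<^sup>2 / 8)"
        using h0 by (simp add: h_def q_def exp_add[symmetric])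
      also have "exp a * (1 + q * (exp h - 1)) = ((b - m) * exp a + (m - a) * exp b) / (b - a)"
        using h0 by (simp add: h_def q_def field_simps exp_diff)
      finally show ?thesis .
    qed
    finally show ?thesis by (simp add: m_def)
  qed
qed

lemma jensen_finite:
  fixes A :: "'a set" and p d :: "'a \<Rightarrow> real"
  assumes A: "finite A" and p: "\<And>j. j \<in> A \<Longrightarrow> p j \<ge> 0" and p1: "(\<Sum>j\<in>A. p j) = 1"
  shows "exp (\<Sum>j\<in>A. p j * d j) \<le> (\<Sum>j\<in>A. p j * exp (d j))"
proof -
  define m where "m = (\<Sum>j\<in>A. p j * d j)"
  have "exp m = exp m * (\<Sum>j\<in>A. p j * (1 + d j - m))"
    using p1 by (simp add: m_def algebra_simps sum.distrib sum_subtractf sum_distrib_right[symmetric])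
  also have "\<dots> = (\<Sum>j\<in>A. p j * (exp m * (1 + (d j - m))))"
    by (simp add: sum_distrib_left algebra_simps)
  also have "\<dots> \<le> (\<Sum>j\<in>A. p j * (exp m * exp (d j - m)))"
    using p by (intro sum_mono mult_left_mono) (auto simp: exp_ge_add_one_self)
  also have "\<dots> = (\<Sum>j\<in>A. p j * exp (d j))" by (simp add: exp_diff)
  finally show ?thesis by (simp add: m_def)
qed

lemma lse_split:
  fixes z d :: "'k::finite \<Rightarrow> real"
  defines "Z \<equiv> (\<Sum>j\<in>UNIV. exp (z j))"
  shows "Z > 0"
    and "(\<Sum>j\<in>UNIV. exp (z j + d j)) = Z * (\<Sum>j\<in>UNIV. (exp (z j) / Z) * exp (d j))"
    and "(\<Sum>j\<in>UNIV. exp (z j) / Z) = 1"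
    and "(\<Sum>j\<in>UNIV. (exp (z j) / Z) * d j) = (\<Sum>j\<in>UNIV. exp (z j) * d j) / Z"
proof -
  show Z: "Z > 0" unfolding Z_def by (intro sum_pos) auto
  show "(\<Sum>j\<in>UNIV. exp (z j + d j)) = Z * (\<Sum>j\<in>UNIV. (exp (z j) / Z) * exp (d j))"
    using Z by (simp add: sum_distrib_left exp_add)
  show "(\<Sum>j\<in>UNIV. exp (z j) / Z) = 1"
    using Z by (simp add: sum_divide_distrib[symmetric] Z_def)
  show "(\<Sum>j\<in>UNIV. (exp (z j) / Z) * d j) = (\<Sum>j\<in>UNIV. exp (z j) * d j) / Z"
    by (simp add: sum_divide_distrib)
qed

lemma lse_lower:
  fixes z d :: "'k::finite \<Rightarrow> real"
  shows "ln (\<Sum>j\<in>UNIV. exp (z j)) + (\<Sum>j\<in>UNIV. exp (z j) * d j) / (\<Sum>j\<in>UNIV. exp (z j))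
         \<le> ln (\<Sum>j\<in>UNIV. exp (z j + d j))"
proof -
  define Z where "Z = (\<Sum>j\<in>UNIV. exp (z j))"
  note sp = lse_split(1)[where z=z, folded Z_def] lse_split(2)[where z=z and d=d, folded Z_def] lse_split(3)[where z=z, folded Z_def] lse_split(4)[where z=z and d=d, folded Z_def]
  have "exp ((\<Sum>j\<in>UNIV. exp (z j) * d j) / Z) \<le> (\<Sum>j\<in>UNIV. (exp (z j) / Z) * exp (d j))"
    using jensen_finite[of UNIV "\<lambda>j. exp (z j) / Z" d] sp by simp
  moreover have "(\<Sum>j\<in>UNIV. (exp (z j) / Z) * exp (d j)) > 0"
    using sp(1) by (intro sum_pos) auto
  ultimately have "(\<Sum>j\<in>UNIV. exp (z j) * d j) / Z \<le> ln (\<Sum>j\<in>UNIV. (exp (z j) / Z) * exp (d j))"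
    by (metis ln_exp ln_le_cancel_iff exp_gt_zero)
  moreover have "(\<Sum>j\<in>UNIV. (exp (z j) / Z) * exp (d j)) > 0"
    using sp(1) by (intro sum_pos) auto
  ultimately show ?thesis using sp by (simp add: ln_mult Z_def[symmetric])
qed

lemma lse_upper:
  fixes z d :: "'k::finite \<Rightarrow> real"
  assumes "\<And>j. a \<le> d j \<and> d j \<le> b"
  shows "ln (\<Sum>j\<in>UNIV. exp (z j + d j)) \<le>
    ln (\<Sum>j\<in>UNIV. exp (z j)) + (\<Sum>j\<in>UNIV. exp (z j) * d j) / (\<Sum>j\<in>UNIV. exp (z j)) + (b - a)\<^sup>2 / 8"
proof -
  define Z where "Z = (\<Sum>j\<in>UNIV. exp (z j))"
  note sp = lse_split(1)[where z=z, folded Z_def] lse_split(2)[where z=z and d=d, folded Z_def] lse_split(3)[where z=z, folded Z_def] lse_split(4)[where z=z and d=d, folded Z_def]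
  have h: "(\<Sum>j\<in>UNIV. (exp (z j) / Z) * exp (d j)) \<le> exp ((\<Sum>j\<in>UNIV. exp (z j) * d j) / Z + (b - a)\<^sup>2 / 8)"
    using hoeff_finite[of UNIV "\<lambda>j. exp (z j) / Z" a d b] sp assms by simp
  have pos: "(\<Sum>j\<in>UNIV. (exp (z j) / Z) * exp (d j)) > 0"
    using sp(1) by (intro sum_pos) auto
  have "ln (\<Sum>j\<in>UNIV. (exp (z j) / Z) * exp (d j)) \<le> (\<Sum>j\<in>UNIV. exp (z j) * d j) / Z + (b - a)\<^sup>2 / 8"
    using h pos by (metis ln_exp ln_le_cancel_iff exp_gt_zero)
  then show ?thesis using sp pos by (simp add: ln_mult Z_def[symmetric])
qed

lemma lse_deriv:
  fixes z d :: "'k::finite \<Rightarrow> real"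
  shows "((\<lambda>s. ln (\<Sum>j\<in>UNIV. exp (z j + s * d j))) has_real_derivative
           (\<Sum>j\<in>UNIV. exp (z j) * d j) / (\<Sum>j\<in>UNIV. exp (z j))) (at 0)"
proof -
  have Z: "(\<Sum>j\<in>UNIV. exp (z j)) > 0" by (intro sum_pos) auto
  show ?thesis
    apply (rule derivative_eq_intros refl | simp add: Z)+
    done
qed



definition zz :: "real^'d^'k \<Rightarrow> ('d,'k) example \<Rightarrow> 'k \<Rightarrow> real" where
  "zz W ex j = (if j \<noteq> snd ex then 1 else 0) - (W *v fst ex) $ snd ex + (W *v fst ex) $ j"

definition dd :: "real^'d^'k \<Rightarrow> ('d,'k) example \<Rightarrow> 'k \<Rightarrow> real" where
  "dd D ex j = (D *v fst ex) $ j - (D *v fst ex) $ snd ex"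

definition dirder :: "real^'d^'k::finite \<Rightarrow> real^'d^'k \<Rightarrow> ('d,'k) example \<Rightarrow> real" where
  "dirder W D ex = (\<Sum>j\<in>UNIV. exp (zz W ex j) * dd D ex j) / (\<Sum>j\<in>UNIV. exp (zz W ex j))"

lemma loss_zz: "sb_loss W ex = ln (\<Sum>j\<in>UNIV. exp (zz W ex j))"
  by (cases ex) (simp add: sb_loss_def zz_def)

lemma zz_shift: "zz (W + s *\<^sub>R D) ex j = zz W ex j + s * dd D ex j"
  by (simp add: zz_def dd_def matrix_vector_mult_add_rdistrib scaleR_matrix_vector_assoc[symmetric] algebra_simps)

lemma loss_shift: "sb_loss (W + s *\<^sub>R D) ex = ln (\<Sum>j\<in>UNIV. exp (zz W ex j + s * dd D ex j))"
  by (simp add: loss_zz zz_shift)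

lemma loss_lower: "sb_loss W ex + dirder W D ex \<le> sb_loss (W + D) ex"
  using lse_lower[of "zz W ex" "dd D ex"] loss_shift[of W 1 D ex]
  by (simp add: loss_zz dirder_def)

lemma loss_upper:
  assumes "\<And>j. a \<le> dd D ex j \<and> dd D ex j \<le> b"
  shows "sb_loss (W + D) ex \<le> sb_loss W ex + dirder W D ex + (b - a)\<^sup>2 / 8"
  using lse_upper[of a "dd D ex" b "zz W ex"] loss_shift[of W 1 D ex] assms
  by (simp add: loss_zz dirder_def)

lemma sbL_nth: "sb_L S W = (\<Sum>i<length S. sb_loss W (S!i)) / real (length S)"
  by (simp add: sb_L_def sum_list_sum_nth atLeast0LessThan)

lemma lin_comp: "bounded_linear (\<lambda>W::real^'d::finite^'k::finite. (W *v x) $ j)"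
proof -
  have "linear (\<lambda>W::real^'d^'k. (W *v x) $ j)"
    by (rule linearI) (simp_all add: matrix_vector_mult_add_rdistrib scaleR_matrix_vector_assoc[symmetric])
  then show ?thesis by (simp add: linear_conv_bounded_linear)
qed

lemma loss_has_der: "\<exists>F. ((\<lambda>W. sb_loss W ex) has_derivative F) (at W)"
proof -
  have zd: "((\<lambda>W. zz W ex j) has_derivative (\<lambda>h. 0 - (h *v fst ex) $ snd ex + (h *v fst ex) $ j)) (at W)" for j
  proof -
    have A: "((\<lambda>W. (W *v fst ex) $ j) has_derivative (\<lambda>h. (h *v fst ex) $ j)) (at W)"
      by (rule bounded_linear.has_derivative[OF lin_comp]) (rule has_derivative_ident)
    have B: "((\<lambda>W. (W *v fst ex) $ snd ex) has_derivative (\<lambda>h. (h *v fst ex) $ snd ex)) (at W)"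
      by (rule bounded_linear.has_derivative[OF lin_comp]) (rule has_derivative_ident)
    show ?thesis unfolding zz_def
      by (intro has_derivative_add has_derivative_diff has_derivative_const A B)
  qed
  have pos: "0 < (\<Sum>j\<in>UNIV. exp (zz W ex j))" by (intro sum_pos) auto
  have sd: "((\<lambda>W. \<Sum>j\<in>UNIV. exp (zz W ex j)) has_derivative
     (\<lambda>h. \<Sum>j\<in>UNIV. (0 - (h *v fst ex) $ snd ex + (h *v fst ex) $ j) * exp (zz W ex j))) (at W)"
    by (intro has_derivative_sum has_derivative_exp zd)
  show ?thesis unfolding loss_zz
    using has_derivative_ln[where g="\<lambda>W. \<Sum>j\<in>UNIV. exp (zz W ex j)", OF pos sd] by blast
qed

lemma sbL_has_der: "\<exists>F. (sb_L S has_derivative F) (at W)"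
proof -
  have "\<forall>i. \<exists>F. ((\<lambda>W. sb_loss W (S!i)) has_derivative F) (at W)"
    using loss_has_der by blast
  then obtain F where F: "\<And>i. ((\<lambda>W. sb_loss W (S!i)) has_derivative F i) (at W)" by metis
  have "((\<lambda>W. (1 / real (length S)) * (\<Sum>i<length S. sb_loss W (S!i))) has_derivative
      (\<lambda>h. (1 / real (length S)) * (\<Sum>i<length S. F i h))) (at W)"
    by (intro has_derivative_mult_right has_derivative_sum F)
  moreover have "sb_L S = (\<lambda>W. (1 / real (length S)) * (\<Sum>i<length S. sb_loss W (S!i)))"
    by (rule ext) (simp add: sbL_nth)
  ultimately show ?thesis by auto
qed

lemma grad_of_F:
  fixes f :: "'a::euclidean_space \<Rightarrow> real"
  assumes "(f has_derivative F) (at W)"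
  shows "GDERIV f W :> (\<Sum>b\<in>Basis. F b *\<^sub>R b)"
proof -
  have lin: "linear F" using has_derivative_linear[OF assms] .
  have "F h = h \<bullet> (\<Sum>b\<in>Basis. F b *\<^sub>R b)" for h
  proof -
    have "F h = F (\<Sum>b\<in>Basis. (h \<bullet> b) *\<^sub>R b)" by (simp only: euclidean_representation)
    also have "\<dots> = (\<Sum>b\<in>Basis. F ((h \<bullet> b) *\<^sub>R b))" by (rule linear_sum[OF lin])
    also have "\<dots> = (\<Sum>b\<in>Basis. (h \<bullet> b) * F b)"
      by (rule sum.cong, rule refl, simp only: linear_scale[OF lin] real_scaleR_def)
    also have "\<dots> = h \<bullet> (\<Sum>b\<in>Basis. F b *\<^sub>R b)"
      by (simp only: inner_sum_right inner_scaleR_right mult.commute)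
    finally show ?thesis .
  qed
  then have "F = (\<lambda>h. h \<bullet> (\<Sum>b\<in>Basis. F b *\<^sub>R b))" by (rule ext)
  then show ?thesis unfolding gderiv_def using assms by simp
qed

lemma gderiv_unique:
  assumes "GDERIV f W :> G1" "GDERIV f W :> G2"
  shows "G1 = G2"
proof -
  have "(\<lambda>h. h \<bullet> G1) = (\<lambda>h. h \<bullet> G2)"
    using has_derivative_unique assms unfolding gderiv_def by blast
  then have "(G1 - G2) \<bullet> G1 = (G1 - G2) \<bullet> G2" by (rule fun_cong)
  then have "(G1 - G2) \<bullet> (G1 - G2) = 0" by (simp add: inner_diff_right)
  then show ?thesis by simp
qed

lemma grad_ok: "GDERIV (sb_L S) W :> sb_grad S W"
proof -
  obtain F where F: "(sb_L S has_derivative F) (at W)" using sbL_has_der by blast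
  have G: "GDERIV (sb_L S) W :> (\<Sum>b\<in>Basis. F b *\<^sub>R b)" by (rule grad_of_F[OF F])
  show ?thesis unfolding sb_grad_def
    by (rule theI[of _ "(\<Sum>b\<in>Basis. F b *\<^sub>R b)"], rule G, rule gderiv_unique[OF _ G])
qed

lemma dir_deriv_grad:
  assumes "GDERIV f W :> G"
  shows "((\<lambda>s. f (W + s *\<^sub>R D)) has_real_derivative (D \<bullet> G)) (at 0)"
proof -
  have g: "((\<lambda>s::real. W + s *\<^sub>R D) has_derivative (\<lambda>s. s *\<^sub>R D)) (at 0)"
    using has_derivative_add[OF has_derivative_const[of W] has_derivative_scaleR_left[OF has_derivative_ident, of D]]
    by simp
  have f: "(f has_derivative (\<lambda>h. h \<bullet> G)) (at (W + 0 *\<^sub>R D))"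
    using assms unfolding gderiv_def by simp
  have "((\<lambda>s. f (W + s *\<^sub>R D)) has_derivative (\<lambda>s. (s *\<^sub>R D) \<bullet> G)) (at 0)"
    using has_derivative_compose[OF g f] by (simp add: o_def)
  moreover have "(\<lambda>s. (s *\<^sub>R D) \<bullet> G) = (*) (D \<bullet> G)" by (auto simp: mult.commute)
  ultimately show ?thesis by (simp add: has_field_derivative_def)
qed

lemma dir_deriv_direct:
  "((\<lambda>s. sb_L S (W + s *\<^sub>R D)) has_real_derivative
     (\<Sum>i<length S. dirder W D (S!i)) / real (length S)) (at 0)"
proof -
  have "((\<lambda>s. (\<Sum>i<length S. ln (\<Sum>j\<in>UNIV. exp (zz W (S!i) j + s * dd D (S!i) j)))  / real (length S))
     has_real_derivative (\<Sum>i<length S. dirder W D (S!i)) / real (length S)) (at 0)"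
    unfolding dirder_def by (intro DERIV_cdivide DERIV_sum lse_deriv)
  then show ?thesis by (simp add: sbL_nth loss_shift)
qed

lemma dirder_grad: "D \<bullet> sb_grad S W = (\<Sum>i<length S. dirder W D (S!i)) / real (length S)"
  using DERIV_unique[OF dir_deriv_grad[OF grad_ok] dir_deriv_direct] .

lemma L_lower: "sb_L S W + D \<bullet> sb_grad S W \<le> sb_L S (W + D)"
proof -
  have "(\<Sum>i<length S. sb_loss W (S!i)) + (\<Sum>i<length S. dirder W D (S!i)) \<le> (\<Sum>i<length S. sb_loss (W + D) (S!i))"
    unfolding sum.distrib[symmetric] by (intro sum_mono loss_lower)
  then show ?thesis unfolding dirder_grad sbL_nth add_divide_distrib[symmetric]
    by (intro divide_right_mono) auto
qed

lemma L_upper: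
  assumes "\<And>i j. i < length S \<Longrightarrow> a i \<le> dd D (S!i) j \<and> dd D (S!i) j \<le> a i + w"
  shows "sb_L S (W + D) \<le> sb_L S W + D \<bullet> sb_grad S W + w\<^sup>2 / 8"
proof (cases "S = []")
  case True then show ?thesis by (simp add: sb_L_def dirder_grad)
next
  case False
  then have n: "real (length S) > 0" by simp
  have "(\<Sum>i<length S. sb_loss (W + D) (S!i)) \<le> (\<Sum>i<length S. sb_loss W (S!i) + dirder W D (S!i) + w\<^sup>2 / 8)"
  proof (rule sum_mono)
    fix i assume "i \<in> {..<length S}"
    then have "i < length S" by simp
    from loss_upper[of "a i" D "S!i" "a i + w" W, OF assms[OF this]]
    show "sb_loss (W + D) (S!i) \<le> sb_loss W (S!i) + dirder W D (S!i) + w\<^sup>2 / 8" by simp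
  qed
  also have "\<dots> = (\<Sum>i<length S. sb_loss W (S!i)) + (\<Sum>i<length S. dirder W D (S!i)) + real (length S) * (w\<^sup>2 / 8)"
    by (simp add: sum.distrib)
  finally show ?thesis using n unfolding dirder_grad sbL_nth
    by (simp add: field_simps)
qed

lemma L_opt:
  assumes "\<And>s. sb_L S W \<le> sb_L S (W + s *\<^sub>R D)"
  shows "D \<bullet> sb_grad S W = 0"
  using DERIV_local_min[OF dir_deriv_grad[OF grad_ok, of S W D], of 1] assms by simp

definition supp :: "'d set \<Rightarrow> real^'d^'k \<Rightarrow> bool" where
  "supp I V \<longleftrightarrow> (\<forall>i j. i \<notin> I \<longrightarrow> V $ j $ i = 0)"

lemma column_zero_iff: "column i V = 0 \<longleftrightarrow> (\<forall>j. V $ j $ i = 0)"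
  by (simp add: column_def vec_eq_iff)

lemma l1_column: "l1norm (column i G) = (\<Sum>j\<in>UNIV. \<bar>G $ j $ i\<bar>)"
  by (simp add: l1norm_def column_def)

lemma inner_mat: "(A::real^'d::finite^'k::finite) \<bullet> B = (\<Sum>j\<in>UNIV. \<Sum>i\<in>UNIV. A $ j $ i * B $ j $ i)"
  by (simp add: inner_vec_def)

lemma run_inv:
  fixes Ws :: "nat \<Rightarrow> real^'d::finite^'k::finite"
  assumes run: "shareboost_run S T Ws Is rs" and t: "t \<le> T"
  shows "supp (Is t) (Ws t) \<and> (\<forall>V. supp (Is t) V \<longrightarrow> sb_L S (Ws t) \<le> sb_L S V) \<and> card (Is t) \<le> t"
  using t
proof (induction t)
  case 0
  have "supp {} V \<Longrightarrow> V = 0" for V :: "real^'d^'k" by (simp add: supp_def vec_eq_iff)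
  then show ?case using run by (auto simp: shareboost_run_def supp_def)
next
  case (Suc t)
  then have tT: "t < T" by simp
  with Suc have ih: "card (Is t) \<le> t" by simp
  from run tT have R: "Is (Suc t) = insert (rs t) (Is t)"
      "\<forall>i. i \<notin> Is (Suc t) \<longrightarrow> column i (Ws (Suc t)) = 0"
      "\<forall>V. (\<forall>i. i \<notin> Is (Suc t) \<longrightarrow> column i V = 0) \<longrightarrow> sb_L S (Ws (Suc t)) \<le> sb_L S V"
    unfolding shareboost_run_def by blast+
  have "card (Is (Suc t)) \<le> Suc t"
    using R(1) ih by (simp add: card_insert_if)
  moreover have "supp (Is (Suc t)) (Ws (Suc t))" using R(2) by (simp add: supp_def column_zero_iff)
  moreover have "\<forall>V. supp (Is (Suc t)) V \<longrightarrow> sb_L S (Ws (Suc t)) \<le> sb_L S V"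
    using R(3) by (simp add: supp_def column_zero_iff)
  ultimately show ?case by blast
qed

lemma sum_if_mult: fixes i :: "'d::finite" shows "(\<Sum>ia\<in>UNIV. (if ia = i then a else 0) * (b ia::real)) = a * b i"
proof -
  have "\<And>ia. (if ia = i then a else 0) * b ia = (if ia = i then a * b i else 0)" by simp
  then show ?thesis by (simp add: sum.delta)
qed

lemma grad_zero:
  fixes W :: "real^'d::finite^'k::finite"
  assumes "supp I W" "\<forall>V. supp I V \<longrightarrow> sb_L S W \<le> sb_L S V" "i \<in> I"
  shows "sb_grad S W $ j $ i = 0"
proof -
  define G where "G = sb_grad S W"
  define D :: "real^'d^'k" where "D = (\<chi> j. \<chi> i'. if i' = i then G $ j $ i else 0)"
  have "supp I (W + s *\<^sub>R D)" for s using assms(1,3) by (auto simp: supp_def D_def)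
  then have "D \<bullet> G = 0" unfolding G_def by (intro L_opt) (use assms(2) in blast)
  moreover have "D \<bullet> G = (\<Sum>j\<in>UNIV. (G $ j $ i)\<^sup>2)"
    by (simp add: inner_mat D_def sum_if_mult power2_eq_square)
  ultimately have "(\<Sum>j\<in>UNIV. (G $ j $ i)\<^sup>2) = 0" by simp
  then have "\<forall>j\<in>UNIV. (G $ j $ i)\<^sup>2 = 0" by (subst (asm) sum_nonneg_eq_0_iff) auto
  then show ?thesis by (simp add: G_def)
qed

lemma conv_bound:
  fixes W Wst :: "real^'d::finite^'k::finite"
  assumes sW: "supp I W" and opt: "\<forall>V. supp I V \<longrightarrow> sb_L S W \<le> sb_L S V"
    and cb: "\<forall>j i. \<bar>Wst $ j $ i\<bar> \<le> c" and c0: "c \<ge> 0"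
    and Mb: "\<forall>i. l1norm (column i (sb_grad S W)) \<le> M"
  shows "sb_L S W - sb_L S Wst \<le> c * real (norm_inf0 Wst) * M"
proof -
  define G where "G = sb_grad S W"
  have low: "sb_L S W + (Wst - W) \<bullet> G \<le> sb_L S Wst"
    using L_lower[of S W "Wst - W"] by (simp add: G_def)
  have M0: "M \<ge> 0"
  proof -
    have "0 \<le> l1norm (column undefined G)" by (simp add: l1norm_def sum_nonneg)
    then show ?thesis using Mb G_def by (meson order_trans)
  qed
  have col: "(\<Sum>j\<in>UNIV. (Wst - W) $ j $ i * G $ j $ i) \<ge> - (if column i Wst \<noteq> 0 then c * M else 0)" for i
  proof (cases "i \<in> I")
    case True
    then have "\<And>j. G $ j $ i = 0" unfolding G_def using grad_zero[OF sW opt] by blast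
    then show ?thesis using c0 M0 by simp
  next
    case False
    then have W0: "\<And>j. W $ j $ i = 0" using sW by (simp add: supp_def)
    show ?thesis
    proof (cases "column i Wst = 0")
      case True
      then show ?thesis using W0 by (simp add: column_zero_iff)
    next
      case False
      have "(\<Sum>j\<in>UNIV. (Wst - W) $ j $ i * G $ j $ i) \<ge> (\<Sum>j\<in>UNIV. - (c * \<bar>G $ j $ i\<bar>))"
      proof (rule sum_mono)
        fix j
        have "- (c * \<bar>G $ j $ i\<bar>) \<le> - (\<bar>Wst $ j $ i\<bar> * \<bar>G $ j $ i\<bar>)"
          using cb by (simp add: mult_right_mono)
        also have "\<dots> \<le> Wst $ j $ i * G $ j $ i"
          using abs_ge_self[of "-(Wst $ j $ i * G $ j $ i)"] by (simp add: abs_mult)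
        finally show "- (c * \<bar>G $ j $ i\<bar>) \<le> (Wst - W) $ j $ i * G $ j $ i" using W0 by simp
      qed
      moreover have "(\<Sum>j\<in>UNIV. - (c * \<bar>G $ j $ i\<bar>)) = - (c * l1norm (column i G))"
        by (simp add: l1_column sum_distrib_left sum_negf)
      moreover have "c * l1norm (column i G) \<le> c * M"
        using Mb c0 G_def by (simp add: mult_left_mono)
      ultimately show ?thesis using False by simp
    qed
  qed
  have "(Wst - W) \<bullet> G = (\<Sum>i\<in>UNIV. \<Sum>j\<in>UNIV. (Wst - W) $ j $ i * G $ j $ i)"
    unfolding inner_mat by (rule sum.swap)
  also have "\<dots> \<ge> (\<Sum>i\<in>UNIV. - (if column i Wst \<noteq> 0 then c * M else 0))"
    by (intro sum_mono col)
  finally have ge: "(Wst - W) \<bullet> G \<ge> (\<Sum>i\<in>UNIV. - (if column i Wst \<noteq> 0 then c * M else 0))" .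
  have "(\<Sum>i\<in>UNIV. - (if column i Wst \<noteq> 0 then c * M else 0)) = - (real (card {i. column i Wst \<noteq> 0}) * (c * M))"
    by (simp add: sum_negf sum.If_cases)
  moreover have "norm_inf0 Wst = card {i. column i Wst \<noteq> 0}"
    by (simp add: norm_inf0_def infnorm_pos_lt)
  ultimately show ?thesis using low ge by (simp add: algebra_simps)
qed

lemma smooth_step:
  fixes W W' :: "real^'d::finite^'k::finite"
  assumes X: "\<forall>(x, y)\<in>set S. \<forall>i. \<bar>x $ i\<bar> \<le> 1" and sW: "supp I W"
    and opt: "\<forall>V. supp (insert r I) V \<longrightarrow> sb_L S W' \<le> sb_L S V"
  shows "sb_L S W' \<le> sb_L S W - (l1norm (column r (sb_grad S W)))\<^sup>2 / 2"
proof -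
  define G where "G = sb_grad S W"
  define M where "M = l1norm (column r G)"
  have M0: "M \<ge> 0" by (simp add: M_def l1norm_def sum_nonneg)
  define D :: "real^'d^'k" where "D = (\<chi> j. \<chi> i. if i = r then - (M * sgn (G $ j $ r)) else 0)"
  have sg: "sgn g * g = \<bar>g\<bar>" for g :: real by (simp add: sgn_if)
  have DG: "D \<bullet> G = - M\<^sup>2"
  proof -
    have "D \<bullet> G = (\<Sum>j\<in>UNIV. - (M * sgn (G $ j $ r)) * G $ j $ r)"
      by (simp add: inner_mat D_def sum_if_mult)
    also have "\<dots> = - M * (\<Sum>j\<in>UNIV. \<bar>G $ j $ r\<bar>)"
      by (simp add: sum_distrib_left sg mult.assoc sum_negf)
    also have "\<dots> = - M\<^sup>2" by (simp add: M_def l1_column G_def power2_eq_square)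
    finally show ?thesis .
  qed
  have Dv: "(D *v x) $ j = - (M * sgn (G $ j $ r)) * x $ r" for x j
    by (simp add: matrix_vector_mult_def D_def sum_if_mult)
  have Db: "\<bar>(D *v x) $ j\<bar> \<le> M" if "\<bar>x $ r\<bar> \<le> 1" for x j
  proof -
    have "\<bar>(D *v x) $ j\<bar> = M * \<bar>sgn (G $ j $ r)\<bar> * \<bar>x $ r\<bar>"
      using M0 by (simp add: Dv abs_mult)
    also have "\<dots> \<le> M * 1 * 1"
      using M0 that by (intro mult_mono) (auto simp: abs_sgn_eq)
    finally show ?thesis by simp
  qed
  define a where "a i = - M - (D *v fst (S!i)) $ snd (S!i)" for i
  have ab: "a i \<le> dd D (S!i) j \<and> dd D (S!i) j \<le> a i + 2 * M" if "i < length S" for i j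
  proof -
    have "S!i \<in> set S" using that by simp
    moreover have "\<forall>p\<in>set S. \<forall>i. \<bar>fst p $ i\<bar> \<le> 1" using X by auto
    ultimately have "\<bar>fst (S!i) $ r\<bar> \<le> 1" by blast
    then have "\<bar>(D *v fst (S!i)) $ j\<bar> \<le> M" by (rule Db)
    then show ?thesis by (simp add: a_def dd_def abs_le_iff)
  qed
  have "sb_L S (W + D) \<le> sb_L S W + D \<bullet> sb_grad S W + (2 * M)\<^sup>2 / 8"
    by (rule L_upper[where a=a]) (use ab in blast)
  also have "\<dots> = sb_L S W - M\<^sup>2 / 2"
    using DG by (simp add: G_def power2_eq_square)
  finally have "sb_L S (W + D) \<le> sb_L S W - M\<^sup>2 / 2" .
  moreover have "supp (insert r I) (W + D)" using sW by (auto simp: supp_def D_def)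
  ultimately show ?thesis using opt by (fastforce simp: M_def G_def)
qed

lemma recur_step:
  fixes a d0 d1 :: real and t :: nat
  assumes h: "real t * d0 \<le> a" and a0: "a \<ge> 0" and dd: "d1 \<le> d0"
    and sq: "d0 \<ge> 0 \<Longrightarrow> d0\<^sup>2 \<le> a * (d0 - d1)"
  shows "real (Suc t) * d1 \<le> a"
proof (cases "d1 \<le> 0")
  case True
  then have "real (Suc t) * d1 \<le> 0" by (simp add: mult_nonneg_nonpos)
  then show ?thesis using a0 by linarith
next
  case False
  then have d1: "d1 > 0" by simp
  then have d0: "d0 > 0" using dd by simp
  have sq': "d0\<^sup>2 \<le> a * (d0 - d1)" using sq d0 by simp
  have "d0 * (real (Suc t) * d1) = (real t * d0) * d1 + d0 * d1" by (simp add: algebra_simps)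
  also have "\<dots> \<le> a * d1 + d0 * d1" using h d1 by (simp add: mult_right_mono)
  also have "\<dots> \<le> (a * d0 - d0\<^sup>2) + d0 * d1" using sq' by (simp add: algebra_simps)
  also have "\<dots> \<le> a * d0" using dd d0 by (simp add: power2_eq_square mult_left_mono)
  finally have "d0 * (real (Suc t) * d1) \<le> d0 * a" by (simp add: mult.commute)
  then show ?thesis using d0 by simp
qed

theorem corollary1:
  fixes S :: "('d::finite, 'k::finite) example list"
    and \<epsilon> c :: real and r :: nat and Wstar :: "real^'d^'k"
    and Ws :: "nat \<Rightarrow> real^'d^'k" and Is :: "nat \<Rightarrow> 'd set" and rs :: "nat \<Rightarrow> 'd"
  assumes "\<forall>(x, y)\<in>set S. \<forall>i. \<bar>x $ i\<bar> \<le> 1"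
    and "\<epsilon> > 0" and "c > 0"
    and "sb_L S Wstar \<le> \<epsilon>"
    and "\<forall>j i. \<bar>Wstar $ j $ i\<bar> \<le> c"
    and "norm_inf0 Wstar = r"
    and "shareboost_run S (nat \<lceil>4 * real r ^ 2 * c ^ 2 / \<epsilon>\<rceil>) Ws Is rs"
  shows "sb_L S (Ws (nat \<lceil>4 * real r ^ 2 * c ^ 2 / \<epsilon>\<rceil>)) \<le> 2 * \<epsilon>
       \<and> norm_inf0 (Ws (nat \<lceil>4 * real r ^ 2 * c ^ 2 / \<epsilon>\<rceil>)) \<le> nat \<lceil>4 * real r ^ 2 * c ^ 2 / \<epsilon>\<rceil>"
proof -
  note X = assms(1) and eps = assms(2) and c0 = assms(3) and Lst = assms(4) and cb = assms(5)
    and rdef = assms(6)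
  define T where "T = nat \<lceil>4 * real r ^ 2 * c ^ 2 / \<epsilon>\<rceil>"
  have run: "shareboost_run S T Ws Is rs" using assms(7) by (simp add: T_def)
  have invT: "supp (Is T) (Ws T) \<and> card (Is T) \<le> T" using run_inv[OF run, of T] by simp
  have sparse: "norm_inf0 (Ws T) \<le> T"
  proof -
    have "{i. infnorm (column i (Ws T)) > 0} \<subseteq> Is T"
      using invT by (auto simp: supp_def infnorm_pos_lt column_zero_iff)
    then have "norm_inf0 (Ws T) \<le> card (Is T)" unfolding norm_inf0_def by (intro card_mono) auto
    then show ?thesis using invT by simp
  qed
  have loss: "sb_L S (Ws T) \<le> 2 * \<epsilon>"
  proof (cases "r = 0")
    case True
    then have "card {i. infnorm (column i Wstar) > 0} = 0" using rdef by (simp add: norm_inf0_def)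
    then have "{i. infnorm (column i Wstar) > 0} = {}" by simp
    then have "\<forall>i. column i Wstar = 0" by (auto simp: infnorm_pos_lt)
    then have "\<forall>i j. Wstar $ j $ i = 0" by (simp add: column_zero_iff)
    then have "Wstar = 0" by (simp add: vec_eq_iff)
    moreover have "T = 0" using True by (simp add: T_def)
    moreover have "Ws 0 = 0" using run by (simp add: shareboost_run_def)
    ultimately show ?thesis using Lst eps by simp
  next
    case False
    then have rpos: "real r > 0" by simp
    define Dl where "Dl t = sb_L S (Ws t) - \<epsilon>" for t
    define A where "A = 2 * real r ^ 2 * c ^ 2"
    have A0: "A > 0" using rpos c0 by (simp add: A_def)
    have step: "Dl (Suc t) \<le> Dl t \<and> (Dl t \<ge> 0 \<longrightarrow> (Dl t)\<^sup>2 \<le> A * (Dl t - Dl (Suc t)))" if tT: "t < T" for t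
    proof -
      from run tT have R1: "\<forall>i. l1norm (column i (sb_grad S (Ws t))) \<le> l1norm (column (rs t) (sb_grad S (Ws t)))"
        and R2: "Is (Suc t) = insert (rs t) (Is t)"
        unfolding shareboost_run_def by blast+
      have it: "supp (Is t) (Ws t)" "\<forall>V. supp (Is t) V \<longrightarrow> sb_L S (Ws t) \<le> sb_L S V"
        using run_inv[OF run, of t] tT by auto
      have iS: "\<forall>V. supp (insert (rs t) (Is t)) V \<longrightarrow> sb_L S (Ws (Suc t)) \<le> sb_L S V"
        using run_inv[OF run, of "Suc t"] tT R2 by auto
      define M where "M = l1norm (column (rs t) (sb_grad S (Ws t)))"
      have M0: "M \<ge> 0" by (simp add: M_def l1norm_def sum_nonneg)
      have sm: "sb_L S (Ws (Suc t)) \<le> sb_L S (Ws t) - M\<^sup>2 / 2"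
        using smooth_step[OF X it(1) iS] by (simp add: M_def)
      have cv: "sb_L S (Ws t) - sb_L S Wstar \<le> c * real r * M"
        using conv_bound[OF it(1) it(2) cb _ R1] c0 rdef by (simp add: M_def)
      have d1: "Dl (Suc t) \<le> Dl t" using sm zero_le_power2[of M] unfolding Dl_def by linarith
      have "Dl t \<ge> 0 \<longrightarrow> (Dl t)\<^sup>2 \<le> A * (Dl t - Dl (Suc t))"
      proof
        assume d0: "Dl t \<ge> 0"
        have "Dl t \<le> c * real r * M" using cv Lst by (simp add: Dl_def)
        then have "(Dl t)\<^sup>2 \<le> (c * real r * M)\<^sup>2" using d0 by (intro power_mono) auto
        also have "\<dots> = A * (M\<^sup>2 / 2)" by (simp add: A_def power_mult_distrib)
        also have "\<dots> \<le> A * (Dl t - Dl (Suc t))" using sm A0 by (intro mult_left_mono) (auto simp: Dl_def)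
        finally show "(Dl t)\<^sup>2 \<le> A * (Dl t - Dl (Suc t))" .
      qed
      with d1 show ?thesis by blast
    qed
    have ind: "t \<le> T \<Longrightarrow> real t * Dl t \<le> A" for t
    proof (induction t)
      case 0 then show ?case using A0 by simp
    next
      case (Suc t)
      then have tT: "t < T" by simp
      with Suc have "real t * Dl t \<le> A" by simp
      then show ?case using recur_step[of t "Dl t" A "Dl (Suc t)"] step[OF tT] A0 by simp
    qed
    have TD: "real T * Dl T \<le> A" using ind by simp
    show ?thesis
    proof (cases "Dl T \<le> 0")
      case True then show ?thesis using eps by (simp add: Dl_def)
    next
      case False
      have Tge: "real T \<ge> 2 * A / \<epsilon>"
      proof -
        have "2 * A / \<epsilon> = 4 * real r ^ 2 * c ^ 2 / \<epsilon>" by (simp add: A_def)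
        also have "\<dots> \<le> real T" unfolding T_def by linarith
        finally show ?thesis .
      qed
      have "(2 * A / \<epsilon>) * Dl T \<le> real T * Dl T" using Tge False by (intro mult_right_mono) auto
      then have "(2 * A / \<epsilon>) * Dl T \<le> A" using TD by linarith
      then have "2 * A * Dl T \<le> A * \<epsilon>" using eps by (simp add: field_simps)
      then have "Dl T \<le> \<epsilon> / 2" using A0 eps by (simp add: field_simps)
      then show ?thesis using eps by (simp add: Dl_def)
    qed
  qed
  show ?thesis using loss sparse by (simp add: T_def)
qed

end
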